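(* Let $B=\begin{pmatrix}1&0&0\\0&0&-1\\0&1&0\end{pmatrix}$ and let $\mathcal{L}:M_3\to M_3$ be $\mathcal{L}(X)=\tfrac12B(\mathrm{tr}(X)I_3-X^{T})B^*-X$. Then $\{e^{t\mathcal{L}}\}_{t\ge0}$ is a quantum dynamical semigroup of unital quantum channels, and, letting $t_0>0$ be the smallest positive zero of $f(t)=e^{t}-e^{-t/2}-3\sinh(t/2)-2\sin(t/2)$ (numerically $t_0\approx1.4034$), the channel $e^{t\mathcal{L}}$ is not mixed unitary for every $t\in(0,t_0)$.
   Context: $X^T$ is the transpose. A quantum dynamical semigroup of unital quantum channels is a family $\{\Phi_t\}_{t\ge0}$ of completely positive, unital, trace-preserving maps with $\Phi_0=\mathrm{id}$, $\Phi_s\Phi_t=\Phi_{s+t}$, continuous in $t$. A channel is mixed unitary if it equals $\sum_j\lambda_j\mathrm{Ad}_{U_j}$ with unitaries $U_j$, $\lambda_j\ge0$, $\sum_j\lambda_j=1$, where $\mathrm{Ad}_U(X)=U^*XU$. *)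

theory Defs
  imports "HOL-Analysis.Analysis"
begin

type_synonym M3 = "complex^3^3"

definition adj :: "complex^'n^'n \<Rightarrow> complex^'n^'n" where
  "adj X = (\<chi> i j. cnj (X $ j $ i))"

definition unitary_mat :: "complex^'n^'n \<Rightarrow> bool" where
  "unitary_mat U \<longleftrightarrow> adj U ** U = mat 1 \<and> U ** adj U = mat 1"

definition Ad :: "complex^'n^'n \<Rightarrow> complex^'n^'n \<Rightarrow> complex^'n^'n" where
  "Ad U X = adj U ** X ** U"

(* positive semidefiniteness of a k x k block matrix with 3x3 blocks X i j
   (i, j < k), i.e. of an element of M_k(M_3) *)
definition psd_block :: "nat \<Rightarrow> (nat \<Rightarrow> nat \<Rightarrow> M3) \<Rightarrow> bool" where
  "psd_block k X \<longleftrightarrow> (\<forall>v :: nat \<Rightarrow> complex^3.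
     let q = (\<Sum>i<k. \<Sum>j<k. (\<Sum>a\<in>UNIV. cnj (v i $ a) * ((X i j *v v j) $ a)))
     in Im q = 0 \<and> Re q \<ge> 0)"

definition linear_map :: "(M3 \<Rightarrow> M3) \<Rightarrow> bool" where
  "linear_map \<Phi> \<longleftrightarrow> (\<forall>X Y. \<Phi> (X + Y) = \<Phi> X + \<Phi> Y) \<and>
     (\<forall>c X. \<Phi> (\<chi> i j. c * X $ i $ j) = (\<chi> i j. c * \<Phi> X $ i $ j))"

(* complete positivity: id_k \<otimes> \<Phi> is positive for every k *)
definition completely_positive :: "(M3 \<Rightarrow> M3) \<Rightarrow> bool" where
  "completely_positive \<Phi> \<longleftrightarrow>
     (\<forall>k X. psd_block k X \<longrightarrow> psd_block k (\<lambda>i j. \<Phi> (X i j)))"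

definition unital_channel :: "(M3 \<Rightarrow> M3) \<Rightarrow> bool" where
  "unital_channel \<Phi> \<longleftrightarrow> linear_map \<Phi> \<and> completely_positive \<Phi> \<and>
     \<Phi> (mat 1) = mat 1 \<and> (\<forall>X. trace (\<Phi> X) = trace X)"

definition qds_unital :: "(real \<Rightarrow> M3 \<Rightarrow> M3) \<Rightarrow> bool" where
  "qds_unital \<Phi> \<longleftrightarrow> (\<forall>t\<ge>0. unital_channel (\<Phi> t)) \<and> \<Phi> 0 = id \<and>
     (\<forall>s\<ge>0. \<forall>t\<ge>0. \<Phi> s \<circ> \<Phi> t = \<Phi> (s + t)) \<and>
     (\<forall>X. continuous_on {0..} (\<lambda>t. \<Phi> t X))"

definition mixed_unitary :: "(M3 \<Rightarrow> M3) \<Rightarrow> bool" where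
  "mixed_unitary \<Phi> \<longleftrightarrow> (\<exists>(n::nat) (lam :: nat \<Rightarrow> real) (U :: nat \<Rightarrow> M3).
     (\<forall>j<n. lam j \<ge> 0 \<and> unitary_mat (U j)) \<and> (\<Sum>j<n. lam j) = 1 \<and>
     (\<forall>X. \<Phi> X = (\<Sum>j<n. lam j *\<^sub>R Ad (U j) X)))"

definition sup_exp :: "real \<Rightarrow> (M3 \<Rightarrow> M3) \<Rightarrow> M3 \<Rightarrow> M3" where
  "sup_exp t L X = (\<Sum>n. (t ^ n / fact n) *\<^sub>R ((L ^^ n) X))"

(* indices of type 3 are 0,1,2 *)
definition Bmat :: M3 where
  "Bmat = (\<chi> i j. if i = 0 \<and> j = 0 then 1
                  else if i = 1 \<and> j = 2 then -1
                  else if i = 2 \<and> j = 1 then 1 else 0)"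

definition Lgen :: "M3 \<Rightarrow> M3" where
  "Lgen X = (1/2) *\<^sub>R (Bmat ** (mat (trace X) - transpose X) ** adj Bmat) - X"

definition ff :: "real \<Rightarrow> real" where
  "ff t = exp t - exp (- t / 2) - 3 * sinh (t / 2) - 2 * sin (t / 2)"

end

theory Submission
  imports Defs
begin


lemma three0: "(3::3) = 0" by simp
lemma idx3: "(i::3) = 0 \<or> i = 1 \<or> i = 2"
  using exhaust_3[of i, unfolded three0] by blast
lemma sum3: "sum f (UNIV::3 set) = f 0 + f 1 + f 2"
  using sum_3[of f, unfolded three0] by (simp add: add_ac)

lemma sR_e: "((r::real) *\<^sub>R (X::M3)) $ i $ j = of_real r * X $ i $ j"
  by (simp add: of_real_def)

definition sg :: "3 \<Rightarrow> complex" where "sg i = (if i = 1 then -1 else 1)"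
definition pm :: "3 \<Rightarrow> 3" where "pm i = (if i = 0 then 0 else if i = 1 then 2 else 1)"

lemma Bmat_e: "Bmat $ 0 $ 0 = 1" "Bmat $ 0 $ 1 = 0" "Bmat $ 0 $ 2 = 0"
  "Bmat $ 1 $ 0 = 0" "Bmat $ 1 $ 1 = 0" "Bmat $ 1 $ 2 = -1"
  "Bmat $ 2 $ 0 = 0" "Bmat $ 2 $ 1 = 1" "Bmat $ 2 $ 2 = 0"
  by (simp_all add: Bmat_def)

lemma Bmat_row: "Bmat $ i $ k = (if k = pm i then sg i else 0)"
  using idx3[of i] idx3[of k] by (auto simp: Bmat_e sg_def pm_def)

lemma Bmult: "(Bmat ** Y) $ i $ j = sg i * Y $ pm i $ j"
proof -
  have "(Bmat ** Y) $ i $ j = (\<Sum>k\<in>UNIV. Bmat $ i $ k * Y $ k $ j)"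
    by (simp add: matrix_matrix_mult_def)
  also have "\<dots> = (\<Sum>k\<in>UNIV. if k = pm i then sg i * Y $ k $ j else 0)"
    by (rule sum.cong) (auto simp: Bmat_row)
  also have "\<dots> = sg i * Y $ pm i $ j" by simp
  finally show ?thesis .
qed

lemma multBadj: "(Y ** adj Bmat) $ i $ j = sg j * Y $ i $ pm j"
proof -
  have "(Y ** adj Bmat) $ i $ j = (\<Sum>k\<in>UNIV. Y $ i $ k * cnj (Bmat $ j $ k))"
    by (simp add: matrix_matrix_mult_def adj_def)
  also have "\<dots> = (\<Sum>k\<in>UNIV. if k = pm j then Y $ i $ k * cnj (sg j) else 0)"
    by (rule sum.cong) (auto simp: Bmat_row)
  also have "\<dots> = sg j * Y $ i $ pm j" by (simp add: sg_def)
  finally show ?thesis .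
qed

definition Sop :: "M3 \<Rightarrow> M3" where "Sop X = Bmat ** transpose X ** adj Bmat"
definition Tm :: "M3 \<Rightarrow> M3" where "Tm X = mat (trace X)"

lemma Sop_e: "Sop X $ i $ j = sg i * sg j * X $ pm j $ pm i"
  by (simp add: Sop_def multBadj Bmult transpose_def)


lemma Tm_e: "Tm X $ i $ j = (if i = j then X$0$0 + X$1$1 + X$2$2 else 0)"
  by (simp add: Tm_def mat_def trace_def sum3)

lemma Sop_add: "Sop (X + Y) = Sop X + Sop Y"
  by (simp add: vec_eq_iff Sop_e algebra_simps)
lemma Sop_scaleR: "Sop (r *\<^sub>R X) = r *\<^sub>R Sop X"
  by (simp add: vec_eq_iff Sop_e sR_e algebra_simps)
lemma Tm_add: "Tm (X + Y) = Tm X + Tm Y"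
  by (simp add: vec_eq_iff Tm_e algebra_simps)
lemma Tm_scaleR: "Tm (r *\<^sub>R X) = r *\<^sub>R Tm X"
  by (simp add: vec_eq_iff Tm_e sR_e algebra_simps)

lemma Sop4: "Sop (Sop (Sop (Sop X))) = X"
proof -
  { fix i j :: 3
    have "Sop (Sop (Sop (Sop X))) $ i $ j = X $ i $ j"
      using idx3[of i] idx3[of j] by (auto simp: Sop_e sg_def pm_def) }
  then show ?thesis by (simp add: vec_eq_iff)
qed
lemma Tm_Sop: "Tm (Sop X) = Tm X"
  by (simp add: vec_eq_iff Tm_e Sop_e sg_def pm_def)
lemma Sop_Tm: "Sop (Tm X) = Tm X"
proof -
  { fix i j :: 3
    have "Sop (Tm X) $ i $ j = Tm X $ i $ j"
      using idx3[of i] idx3[of j] by (auto simp: Sop_e Tm_e sg_def pm_def) }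
  then show ?thesis by (simp add: vec_eq_iff)
qed
lemma Tm_Tm: "Tm (Tm X) = 3 *\<^sub>R Tm X"
  by (simp add: vec_eq_iff Tm_e sR_e scaleR_conv_of_real)

lemma Lgen_eq: "Lgen X = (1/2) *\<^sub>R Tm X - (1/2) *\<^sub>R Sop X - X"
proof -
  { fix i j :: 3
    have "Lgen X $ i $ j = ((1/2) *\<^sub>R Tm X - (1/2) *\<^sub>R Sop X - X) $ i $ j"
      using idx3[of i] idx3[of j]
      by (auto simp: Lgen_def Sop_e Tm_e sg_def pm_def matrix_matrix_mult_def transpose_def
          adj_def sum3 Bmat_e mat_def trace_def sR_e algebra_simps) }
  then show ?thesis by (simp add: vec_eq_iff)
qed

definition lc :: "real \<Rightarrow> real \<Rightarrow> real \<Rightarrow> real \<Rightarrow> real \<Rightarrow> M3 \<Rightarrow> M3" where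
  "lc a b c d p X = a *\<^sub>R X + b *\<^sub>R Sop X + c *\<^sub>R Sop (Sop X) + d *\<^sub>R Sop (Sop (Sop X)) + p *\<^sub>R Tm X"

lemma lc_cong: "a = a' \<Longrightarrow> b = b' \<Longrightarrow> c = c' \<Longrightarrow> d = d' \<Longrightarrow> p = p' \<Longrightarrow>
  lc a b c d p X = lc a' b' c' d' p' X" by simp

lemma Sop_lc: "Sop (lc a b c d p X) = lc d a b c p X"
  by (simp add: lc_def Sop_add Sop_scaleR Sop4 Sop_Tm algebra_simps)
lemma Tm_lc: "Tm (lc a b c d p X) = (a+b+c+d+3*p) *\<^sub>R Tm X"
  by (simp add: lc_def Tm_add Tm_scaleR Tm_Sop Tm_Tm algebra_simps)
lemma lc_plus: "lc a b c d p X + lc a' b' c' d' p' X = lc (a+a') (b+b') (c+c') (d+d') (p+p') X"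
  by (simp add: lc_def algebra_simps)
lemma lc_minus: "lc a b c d p X - lc a' b' c' d' p' X = lc (a-a') (b-b') (c-c') (d-d') (p-p') X"
  by (simp add: lc_def algebra_simps)
lemma lc_scale: "r *\<^sub>R lc a b c d p X = lc (r*a) (r*b) (r*c) (r*d) (r*p) X"
  by (simp add: lc_def algebra_simps)
lemma Tm_as_lc: "r *\<^sub>R Tm X = lc 0 0 0 0 r X"
  by (simp add: lc_def)
lemma X_as_lc: "X = lc 1 0 0 0 0 X"
  by (simp add: lc_def)
lemma lc_addX: "lc a b c d p (X + Y) = lc a b c d p X + lc a b c d p Y"
  by (simp add: lc_def Sop_add Tm_add algebra_simps)
lemma lc_scaleX: "lc a b c d p (r *\<^sub>R X) = r *\<^sub>R lc a b c d p X"
  by (simp add: lc_def Sop_scaleR Tm_scaleR algebra_simps)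

lemma Lgen_lc: "Lgen (lc a b c d p X) = lc (-a - d/2) (-b - a/2) (-c - b/2) (-d - c/2) ((a+b+c+d)/2) X"
proof -
  have "Lgen (lc a b c d p X) = (1/2) *\<^sub>R ((a+b+c+d+3*p) *\<^sub>R Tm X) - (1/2) *\<^sub>R lc d a b c p X - lc a b c d p X"
    by (simp add: Lgen_eq Sop_lc Tm_lc)
  also have "\<dots> = lc 0 0 0 0 ((1/2) * (a+b+c+d+3*p)) X - lc ((1/2)*d) ((1/2)*a) ((1/2)*b) ((1/2)*c) ((1/2)*p) X - lc a b c d p X"
    by (simp add: lc_scale Tm_as_lc[symmetric])
  also have "\<dots> = lc (-a - d/2) (-b - a/2) (-c - b/2) (-d - c/2) ((a+b+c+d)/2) X"
    by (simp add: lc_minus) (rule lc_cong, simp_all add: field_simps)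
  finally show ?thesis .
qed

lemma lc_comp: "lc a b c d p (lc a' b' c' d' p' X) =
  lc (a*a' + b*d' + c*c' + d*b') (a*b' + b*a' + c*d' + d*c') (a*c' + b*b' + c*a' + d*d')
     (a*d' + b*c' + c*b' + d*a') (p*(a'+b'+c'+d'+3*p') + p'*(a+b+c+d)) X"
proof -
  have "lc a b c d p (lc a' b' c' d' p' X) = a *\<^sub>R lc a' b' c' d' p' X + b *\<^sub>R lc d' a' b' c' p' X
     + c *\<^sub>R lc c' d' a' b' p' X + d *\<^sub>R lc b' c' d' a' p' X + (p * (a'+b'+c'+d'+3*p')) *\<^sub>R Tm X"
    by (simp add: lc_def[of a b c d p] Sop_lc Tm_lc)
  also have "\<dots> = lc (a*a' + b*d' + c*c' + d*b') (a*b' + b*a' + c*d' + d*c') (a*c' + b*b' + c*a' + d*d')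
     (a*d' + b*c' + c*b' + d*a') (p*(a'+b'+c'+d'+3*p') + p'*(a+b+c+d)) X"
    by (simp add: lc_scale Tm_as_lc lc_plus algebra_simps)
  finally show ?thesis .
qed



definition lmb :: complex where "lmb = Complex (-1) (-1/2)"
definition an :: "nat \<Rightarrow> real" where "an n = ((-3/2)^n + (-1/2)^n)/4 + Re (lmb^n)/2"
definition bn :: "nat \<Rightarrow> real" where "bn n = ((-3/2)^n - (-1/2)^n)/4 + Im (lmb^n)/2"
definition cn :: "nat \<Rightarrow> real" where "cn n = ((-3/2)^n + (-1/2)^n)/4 - Re (lmb^n)/2"
definition dn :: "nat \<Rightarrow> real" where "dn n = ((-3/2)^n - (-1/2)^n)/4 - Im (lmb^n)/2"
definition pn :: "nat \<Rightarrow> real" where "pn n = (0^n - (-3/2)^n)/3"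

lemma lmb_Re: "Re (lmb^Suc n) = - Re (lmb^n) + Im (lmb^n)/2"
  by (simp add: lmb_def)
lemma lmb_Im: "Im (lmb^Suc n) = - Im (lmb^n) - Re (lmb^n)/2"
  by (simp add: lmb_def)

lemma p1: "(-3/2::real)^Suc n = (-3/2) * (-3/2)^n" by simp
lemma p2: "(-1/2::real)^Suc n = (-1/2) * (-1/2)^n" by simp
lemma p3: "(0::real)^Suc n = 0" by simp

lemma Lpow: "(Lgen ^^ n) X = lc (an n) (bn n) (cn n) (dn n) (pn n) X"
proof (induction n)
  case 0
  then show ?case by (simp add: lc_def an_def bn_def cn_def dn_def pn_def)
next
  case (Suc n)
  have "(Lgen ^^ Suc n) X = Lgen (lc (an n) (bn n) (cn n) (dn n) (pn n) X)"
    using Suc by simp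
  also have "\<dots> = lc (an (Suc n)) (bn (Suc n)) (cn (Suc n)) (dn (Suc n)) (pn (Suc n)) X"
    unfolding Lgen_lc
    by (rule lc_cong, simp_all add: an_def bn_def cn_def dn_def pn_def lmb_Re lmb_Im p1 p2 p3 del: power_Suc,
        simp_all add: field_simps)
  finally show ?case .
qed

definition x1 :: "real \<Rightarrow> real" where "x1 t = exp (-3*t/2)"
definition x2 :: "real \<Rightarrow> real" where "x2 t = exp (-t/2)"
definition cc :: "real \<Rightarrow> real" where "cc t = exp (-t) * cos (t/2)"
definition dd :: "real \<Rightarrow> real" where "dd t = exp (-t) * sin (t/2)"
definition A0 where "A0 t = (x1 t + x2 t)/4 + cc t/2"
definition A1 where "A1 t = (x1 t - x2 t)/4 - dd t/2"
definition A2 where "A2 t = (x1 t + x2 t)/4 - cc t/2"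
definition A3 where "A3 t = (x1 t - x2 t)/4 + dd t/2"
definition Ap where "Ap t = (1 - x1 t)/3"
definition Et :: "real \<Rightarrow> M3 \<Rightarrow> M3" where "Et t X = lc (A0 t) (A1 t) (A2 t) (A3 t) (Ap t) X"

lemma exp_ser: "(\<lambda>n. (t^n / fact n) * c^n) sums exp (t * c)" for t c :: real
proof -
  have "(\<lambda>n. (t*c)^n /\<^sub>R fact n) sums exp (t * c)" by (rule exp_converges)
  then show ?thesis by (simp add: power_mult_distrib divide_inverse_commute mult_ac)
qed

lemma exp_ser_c: "(\<lambda>n. of_real (t^n / fact n) * lmb^n) sums exp (of_real t * lmb)" for t :: real
proof -
  have "(\<lambda>n. (of_real t*lmb)^n /\<^sub>R fact n) sums exp (of_real t * lmb)" by (rule exp_converges)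
  moreover have "(of_real t*lmb)^n /\<^sub>R fact n = of_real (t^n / fact n) * lmb^n" for n
    by (simp add: power_mult_distrib scaleR_conv_of_real divide_inverse_commute mult_ac)
  ultimately show ?thesis by simp
qed

lemma Re_ofr: "Re (complex_of_real r * z) = r * Re z" by simp
lemma Im_ofr: "Im (complex_of_real r * z) = r * Im z" by simp

lemma exp_ser_Re: "(\<lambda>n. (t^n / fact n) * Re (lmb^n)) sums cc t" for t :: real
proof -
  have "(\<lambda>n. Re (of_real (t^n / fact n) * lmb^n)) sums Re (exp (of_real t * lmb))"
    by (rule sums_Re[OF exp_ser_c])
  moreover have "Re (exp (of_real t * lmb)) = cc t"
    by (simp add: Re_exp cc_def lmb_def)
  ultimately show ?thesis unfolding Re_ofr by simp
qed

lemma exp_ser_Im: "(\<lambda>n. (t^n / fact n) * Im (lmb^n)) sums (- dd t)" for t :: real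
proof -
  have "(\<lambda>n. Im (of_real (t^n / fact n) * lmb^n)) sums Im (exp (of_real t * lmb))"
    by (rule sums_Im[OF exp_ser_c])
  moreover have "Im (exp (of_real t * lmb)) = - dd t"
    by (simp add: Im_exp dd_def lmb_def)
  ultimately show ?thesis unfolding Im_ofr by simp
qed

lemma ser_an: "(\<lambda>n. (t^n / fact n) * an n) sums A0 t"
proof -
  have "(\<lambda>n. ((t^n / fact n) * (-3/2)^n + (t^n / fact n) * (-1/2)^n)/4 + (t^n / fact n) * Re (lmb^n)/2)
     sums ((exp (t*(-3/2)) + exp (t * (-1/2)))/4 + cc t/2)"
    by (intro sums_add sums_divide exp_ser exp_ser_Re)
  then show ?thesis by (simp add: an_def A0_def x1_def x2_def algebra_simps)
qed
lemma ser_bn: "(\<lambda>n. (t^n / fact n) * bn n) sums A1 t"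
proof -
  have "(\<lambda>n. ((t^n / fact n) * (-3/2)^n - (t^n / fact n) * (-1/2)^n)/4 + (t^n / fact n) * Im (lmb^n)/2)
     sums ((exp (t*(-3/2)) - exp (t * (-1/2)))/4 + (- dd t)/2)"
    by (intro sums_add sums_diff sums_divide exp_ser exp_ser_Im)
  then show ?thesis by (simp add: bn_def A1_def x1_def x2_def algebra_simps)
qed
lemma ser_cn: "(\<lambda>n. (t^n / fact n) * cn n) sums A2 t"
proof -
  have "(\<lambda>n. ((t^n / fact n) * (-3/2)^n + (t^n / fact n) * (-1/2)^n)/4 - (t^n / fact n) * Re (lmb^n)/2)
     sums ((exp (t*(-3/2)) + exp (t * (-1/2)))/4 - cc t/2)"
    by (intro sums_add sums_diff sums_divide exp_ser exp_ser_Re)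
  then show ?thesis by (simp add: cn_def A2_def x1_def x2_def algebra_simps)
qed
lemma ser_dn: "(\<lambda>n. (t^n / fact n) * dn n) sums A3 t"
proof -
  have "(\<lambda>n. ((t^n / fact n) * (-3/2)^n - (t^n / fact n) * (-1/2)^n)/4 - (t^n / fact n) * Im (lmb^n)/2)
     sums ((exp (t*(-3/2)) - exp (t * (-1/2)))/4 - (- dd t)/2)"
    by (intro sums_add sums_diff sums_divide exp_ser exp_ser_Im)
  then show ?thesis by (simp add: dn_def A3_def x1_def x2_def algebra_simps)
qed
lemma ser_pn: "(\<lambda>n. (t^n / fact n) * pn n) sums Ap t"
proof -
  have "(\<lambda>n. ((t^n / fact n) * 0^n - (t^n / fact n) * (-3/2)^n)/3)
     sums ((exp (t*0) - exp (t * (-3/2)))/3)"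
    by (intro sums_diff sums_divide exp_ser)
  then show ?thesis by (simp add: pn_def Ap_def x1_def algebra_simps)
qed

lemma lc_sums:
  assumes "a sums A" "b sums B'" "c sums C" "d sums D" "p sums P"
  shows "(\<lambda>n. lc (a n) (b n) (c n) (d n) (p n) X) sums lc A B' C D P X"
  unfolding lc_def
  by (intro sums_add sums_scaleR_left assms)

lemma sup_exp_Et: "sup_exp t Lgen = Et t"
proof
  fix X
  have "(\<lambda>n. (t ^ n / fact n) *\<^sub>R ((Lgen ^^ n) X)) =
     (\<lambda>n. lc ((t^n / fact n) * an n) ((t^n / fact n) * bn n) ((t^n / fact n) * cn n)
            ((t^n / fact n) * dn n) ((t^n / fact n) * pn n) X)"
    by (simp add: Lpow lc_scale)
  moreover have "\<dots> sums Et t X"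
    unfolding Et_def by (intro lc_sums ser_an ser_bn ser_cn ser_dn ser_pn)
  ultimately show "sup_exp t Lgen X = Et t X"
    unfolding sup_exp_def by (simp add: sums_iff)
qed



lemma x1_add: "x1 (s+t) = x1 s * x1 t"
proof -
  have "- 3 * (s+t) / 2 = (- 3 * s / 2) + (- 3 * t / 2 :: real)" by simp
  then show ?thesis unfolding x1_def by (metis exp_add)
qed
lemma x2_add: "x2 (s+t) = x2 s * x2 t"
proof -
  have "- (s+t) / 2 = (- s / 2) + (- t / 2 :: real)" by simp
  then show ?thesis unfolding x2_def by (metis exp_add)
qed
lemma em_add: "exp (-(s+t)) = exp (-s) * exp (-t::real)"
  using exp_add[of "-s" "-t"] by simp
lemma cc_add: "cc (s+t) = cc s * cc t - dd s * dd t"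
proof -
  have "(s+t)/2 = s/2 + t/2" by simp
  then have h: "cos ((s+t)/2) = cos (s/2) * cos (t/2) - sin (s/2) * sin (t/2)"
    by (metis cos_add)
  show ?thesis unfolding cc_def dd_def em_add h by (simp add: algebra_simps)
qed
lemma dd_add: "dd (s+t) = dd s * cc t + cc s * dd t"
proof -
  have "(s+t)/2 = s/2 + t/2" by simp
  then have h: "sin ((s+t)/2) = sin (s/2) * cos (t/2) + cos (s/2) * sin (t/2)"
    by (metis sin_add)
  show ?thesis unfolding cc_def dd_def em_add h by (simp add: algebra_simps)
qed

lemma Et_comp: "Et s (Et t X) = Et (s+t) X"
  unfolding Et_def lc_comp
  by (rule lc_cong, simp_all add: A0_def A1_def A2_def A3_def Ap_def x1_add x2_add cc_add dd_add,
      simp_all add: field_simps)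

lemma Et_0: "Et 0 = id"
  by (rule ext) (simp add: Et_def A0_def A1_def A2_def A3_def Ap_def x1_def x2_def cc_def dd_def lc_def)

lemma coef_sum: "A0 t + A1 t + A2 t + A3 t + 3 * Ap t = 1"
  by (simp add: A0_def A1_def A2_def A3_def Ap_def field_simps)

lemma Sop_one: "Sop (mat 1) = mat 1"
proof -
  { fix i j :: 3
    have "Sop (mat 1) $ i $ j = mat 1 $ i $ j"
      using idx3[of i] idx3[of j] by (auto simp: Sop_e sg_def pm_def mat_def) }
  then show ?thesis by (simp add: vec_eq_iff)
qed
lemma three_sR: "(3::real) *\<^sub>R (1::complex) = 3" by (simp add: scaleR_conv_of_real)
lemma Tm_one: "Tm (mat 1) = 3 *\<^sub>R mat 1"
  by (simp add: vec_eq_iff Tm_e sR_e mat_def three_sR)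

lemma Et_one: "Et t (mat 1) = mat 1"
proof -
  have "Et t (mat 1) = (A0 t + A1 t + A2 t + A3 t + 3 * Ap t) *\<^sub>R mat 1"
    by (simp add: Et_def lc_def Sop_one Tm_one algebra_simps)
  then show ?thesis by (simp add: coef_sum)
qed

lemma sRc: "(r::real) *\<^sub>R (z::complex) = complex_of_real r * z" by (simp add: scaleR_conv_of_real)

lemma trace_sR: "trace (r *\<^sub>R (X::M3)) = of_real r * trace X"
  by (simp add: trace_def sRc sum_distrib_left)
lemma trace_Sop: "trace (Sop X) = trace X"
  by (simp add: trace_def sum3 Sop_e sg_def pm_def)
lemma trace_Tm: "trace (Tm X) = 3 * trace X"
  by (simp add: trace_def sum3 Tm_e)

lemma trace_Et: "trace (Et t X) = trace X"
proof -
  have "trace (Et t X) = of_real (A0 t + A1 t + A2 t + A3 t + 3 * Ap t) * trace X"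
    by (simp add: Et_def lc_def trace_add trace_sR trace_Sop trace_Tm algebra_simps)
  then show ?thesis by (simp add: coef_sum)
qed

definition cs :: "complex \<Rightarrow> M3 \<Rightarrow> M3" where "cs z X = (\<chi> i j. z * X $ i $ j)"

lemma lc_e: "lc a b c d p X $ i $ j = of_real a * X $ i $ j + of_real b * Sop X $ i $ j
  + of_real c * Sop (Sop X) $ i $ j + of_real d * Sop (Sop (Sop X)) $ i $ j + of_real p * Tm X $ i $ j"
  by (simp add: lc_def sRc)

lemma lc_cs: "lc a b c d p (cs z X) = cs z (lc a b c d p X)"
  by (simp add: vec_eq_iff lc_e Sop_e Tm_e cs_def algebra_simps)

lemma Et_linear: "linear_map (Et t)"
  unfolding linear_map_def Et_def
  using lc_addX lc_cs by (simp add: cs_def)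

lemma Et_cont: "continuous_on {0..} (\<lambda>t. Et t X)"
  unfolding Et_def lc_def A0_def A1_def A2_def A3_def Ap_def x1_def x2_def cc_def dd_def
  by (intro continuous_intros) auto



definition qf :: "nat \<Rightarrow> (nat \<Rightarrow> nat \<Rightarrow> M3) \<Rightarrow> (nat \<Rightarrow> complex^3) \<Rightarrow> complex" where
  "qf k Y v = (\<Sum>i<k. \<Sum>j<k. \<Sum>a\<in>UNIV. cnj (v i $ a) * ((Y i j *v v j) $ a))"

lemma psd_iff: "psd_block k Y \<longleftrightarrow> (\<forall>v. Im (qf k Y v) = 0 \<and> Re (qf k Y v) \<ge> 0)"
  by (simp add: psd_block_def qf_def Let_def)

lemma qf_add: "qf k (\<lambda>i j. Y i j + Z i j) v = qf k Y v + qf k Z v"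
  by (simp add: qf_def matrix_vector_mult_add_rdistrib distrib_left sum.distrib)

lemma mv_sR: "(((r::real) *\<^sub>R (A::M3)) *v x) $ a = of_real r * (A *v x) $ a"
  by (simp add: matrix_vector_mult_def sRc sum_distrib_left mult.assoc)

lemma qf_scale: "qf k (\<lambda>i j. r *\<^sub>R Y i j) v = of_real r * qf k Y v"
  by (simp add: qf_def mv_sR sum_distrib_left mult_ac)

lemma qf_zero: "qf k (\<lambda>i j. 0) v = 0"
  by (simp add: qf_def)

lemma adj_inner: "(\<Sum>a\<in>UNIV. cnj (v $ a) * ((adj K *v y) $ a)) =
   (\<Sum>b\<in>UNIV. cnj ((K *v v) $ b) * (y $ b))" for K :: "complex^'n^'n"
proof -
  have "(\<Sum>a\<in>UNIV. cnj (v $ a) * ((adj K *v y) $ a)) =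
     (\<Sum>a\<in>UNIV. \<Sum>b\<in>UNIV. cnj (v $ a) * cnj (K $ b $ a) * y $ b)"
    by (simp add: matrix_vector_mult_def adj_def sum_distrib_left mult.assoc)
  also have "\<dots> = (\<Sum>b\<in>UNIV. \<Sum>a\<in>UNIV. cnj (v $ a) * cnj (K $ b $ a) * y $ b)"
    by (rule sum.swap)
  also have "\<dots> = (\<Sum>b\<in>UNIV. cnj ((K *v v) $ b) * (y $ b))"
    by (simp add: matrix_vector_mult_def sum_distrib_right sum_distrib_left mult_ac)
  finally show ?thesis .
qed

lemma qf_Ad: "qf k (\<lambda>i j. Ad K (Y i j)) v = qf k Y (\<lambda>i. K *v v i)"
proof -
  have "(Ad K (Y i j) *v w) = adj K *v (Y i j *v (K *v w))" for i j w
    unfolding Ad_def by (metis matrix_vector_mul_assoc matrix_mul_assoc)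
  then show ?thesis by (simp add: qf_def adj_inner)
qed

lemma cp_Ad: "completely_positive (Ad K)"
  unfolding completely_positive_def psd_iff qf_Ad by blast

lemma cp_add: "completely_positive f \<Longrightarrow> completely_positive g \<Longrightarrow> completely_positive (\<lambda>X. f X + g X)"
  unfolding completely_positive_def psd_iff qf_add by simp

lemma cp_scale: "0 \<le> r \<Longrightarrow> completely_positive f \<Longrightarrow> completely_positive (\<lambda>X. r *\<^sub>R f X)"
  unfolding completely_positive_def psd_iff qf_scale by simp

lemma cp_zero: "completely_positive (\<lambda>X. 0)"
  unfolding completely_positive_def psd_iff qf_zero by simp

lemma cp_sum: "finite I \<Longrightarrow> (\<And>i. i \<in> I \<Longrightarrow> completely_positive (f i)) \<Longrightarrow>
    completely_positive (\<lambda>X. \<Sum>i\<in>I. f i X)"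
proof (induction I rule: finite_induct)
  case empty
  then show ?case by (simp add: cp_zero)
next
  case (insert x F)
  then show ?case by (simp add: cp_add)
qed



definition mk3 :: "complex \<Rightarrow> complex \<Rightarrow> complex \<Rightarrow> complex \<Rightarrow> complex \<Rightarrow> complex \<Rightarrow> complex \<Rightarrow> complex \<Rightarrow> complex \<Rightarrow> M3" where
  "mk3 a b c d e f g h k = (\<chi> i j. if i = 0 then (if j = 0 then a else if j = 1 then b else c)
     else if i = 1 then (if j = 0 then d else if j = 1 then e else f)
     else (if j = 0 then g else if j = 1 then h else k))"

lemma mk3_e: "mk3 a b c d e f g h k $ 0 $ 0 = a" "mk3 a b c d e f g h k $ 0 $ 1 = b" "mk3 a b c d e f g h k $ 0 $ 2 = c"
  "mk3 a b c d e f g h k $ 1 $ 0 = d" "mk3 a b c d e f g h k $ 1 $ 1 = e" "mk3 a b c d e f g h k $ 1 $ 2 = f"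
  "mk3 a b c d e f g h k $ 2 $ 0 = g" "mk3 a b c d e f g h k $ 2 $ 1 = h" "mk3 a b c d e f g h k $ 2 $ 2 = k"
  by (simp_all add: mk3_def)

lemma Ad_e: "Ad K X $ i $ j = (\<Sum>a\<in>UNIV. \<Sum>b\<in>UNIV. cnj (K $ a $ i) * X $ a $ b * K $ b $ j)"
  by (simp add: Ad_def matrix_matrix_mult_def adj_def sum_distrib_left sum_distrib_right mult_ac) (rule sum.swap)

lemma eq3I: "(\<And>i j. i \<in> {0,1,2} \<Longrightarrow> j \<in> {0,1,2} \<Longrightarrow> (X::M3) $ i $ j = Y $ i $ j) \<Longrightarrow> X = Y"
  using idx3 by (auto simp: vec_eq_iff)

definition Dm :: M3 where "Dm = mk3 1 0 0 0 (-1) 0 0 0 (-1)"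
definition K1 :: M3 where "K1 = mk3 0 0 1 (-1) 0 0 0 0 0"
definition K2 :: M3 where "K2 = mk3 0 (-1) 0 0 0 0 (-1) 0 0"
definition K3 :: M3 where "K3 = mk3 0 0 0 0 (-1) 0 0 0 (-1)"
definition K1' :: M3 where "K1' = mk3 0 0 (-1) (-1) 0 0 0 0 0"
definition K2' :: M3 where "K2' = mk3 0 1 0 0 0 0 (-1) 0 0"
definition K3' :: M3 where "K3' = mk3 0 0 0 0 1 0 0 0 1"

lemma Sop2_Ad: "Sop (Sop X) = Ad Dm X"
  by (rule eq3I) (auto simp: Sop_e Ad_e sum3 Dm_def mk3_e sg_def pm_def)

lemma TmS_Ad: "Tm X - Sop X = Ad K1 X + Ad K2 X + Ad K3 X"
  by (rule eq3I) (auto simp: Sop_e Tm_e Ad_e sum3 K1_def K2_def K3_def mk3_e sg_def pm_def)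

lemma TmS3_Ad: "Tm X - Sop (Sop (Sop X)) = Ad K1' X + Ad K2' X + Ad K3' X"
  by (rule eq3I) (auto simp: Sop_e Tm_e Ad_e sum3 K1'_def K2'_def K3'_def mk3_e sg_def pm_def)

definition Eu :: "3 \<Rightarrow> 3 \<Rightarrow> M3" where "Eu a c = (\<chi> i j. if i = a \<and> j = c then 1 else 0)"

lemma Tm_Ad: "Tm X = (\<Sum>a\<in>UNIV. \<Sum>c\<in>UNIV. Ad (Eu a c) X)"
  by (rule eq3I) (auto simp: Tm_e Ad_e sum3 Eu_def)



lemma x1_u: "x1 t = (x2 t)^3"
proof -
  have "-3*t/2 = real 3 * (-t/2)" by simp
  then show ?thesis unfolding x1_def x2_def by (metis exp_of_nat_mult)
qed
lemma em_u: "exp (-t) = (x2 t)^2"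
proof -
  have "-t = real 2 * (-t/2)" by simp
  then show ?thesis unfolding x2_def by (metis exp_of_nat_mult)
qed
lemma x2_pos: "0 < x2 t" by (simp add: x2_def)

lemma sinh_bound: fixes u :: real assumes "0 \<le> u" shows "2*u \<le> exp u - exp (-u)"
proof -
  define q where "q = 1 - u + u^2/2"
  have e1: "1 + u + u^2/2 \<le> exp u" by (rule exp_lower_Taylor_quadratic[OF assms])
  have qe: "q = ((u-1)^2 + 1)/2" by (simp add: q_def power2_eq_square algebra_simps)
  have pos: "0 < q" unfolding qe by (simp add: add_nonneg_pos)
  have "(1 + u + u^2/2) * q = 1 + u^4/4"
    by (simp add: q_def power2_eq_square power4_eq_xxxx algebra_simps)
  then have "1 \<le> (1 + u + u^2/2) * q" by simp
  also have "\<dots> \<le> exp u * q" using e1 pos by (simp add: mult_right_mono)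
  finally have "1 \<le> exp u * q" .
  then have "exp (-u) * 1 \<le> exp (-u) * (exp u * q)" by (simp add: mult_left_mono)
  also have "\<dots> = q" by (simp add: exp_minus field_simps)
  finally have "exp (-u) \<le> q" by simp
  with e1 show ?thesis unfolding q_def by simp
qed

lemma x2_split: "x2 t = exp (-t) * exp (t/2)"
  unfolding x2_def by (simp add: exp_add[symmetric])
lemma x1_split: "x1 t = exp (-t) * exp (-(t/2))"
  unfolding x1_def by (simp add: exp_add[symmetric])

lemma nA1: assumes "0 \<le> t" shows "0 \<le> - A1 t"
proof -
  have "- A1 t = exp (-t) * ((exp (t/2) - exp (-(t/2)))/4 + sin (t/2)/2)"
    by (simp add: A1_def x2_split x1_split dd_def field_simps)
  moreover have "0 \<le> (exp (t/2) - exp (-(t/2)))/4 + sin (t/2)/2"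
  proof -
    have h: "0 \<le> t/2" using assms by simp
    have "2*(t/2) \<le> exp(t/2) - exp(-(t/2))" by (rule sinh_bound[OF h])
    moreover have "-(t/2) \<le> sin(t/2)" by (rule sin_x_ge_neg_x[OF h])
    ultimately show ?thesis by (simp add: field_simps)
  qed
  ultimately show ?thesis by simp
qed
lemma nA3: assumes "0 \<le> t" shows "0 \<le> - A3 t"
proof -
  have "- A3 t = exp (-t) * ((exp (t/2) - exp (-(t/2)))/4 - sin (t/2)/2)"
    by (simp add: A3_def x2_split x1_split dd_def field_simps)
  moreover have "0 \<le> (exp (t/2) - exp (-(t/2)))/4 - sin (t/2)/2"
  proof -
    have h: "0 \<le> t/2" using assms by simp
    have "2*(t/2) \<le> exp(t/2) - exp(-(t/2))" by (rule sinh_bound[OF h])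
    moreover have "sin(t/2) \<le> t/2" by (rule sin_x_le_x[OF h])
    ultimately show ?thesis by (simp add: field_simps)
  qed
  ultimately show ?thesis by simp
qed

lemma A0_nn: "0 \<le> A0 t"
proof -
  define u where "u = x2 t"
  have u: "0 < u" unfolding u_def by (rule x2_pos)
  have "exp (-t) * (-1) \<le> exp (-t) * cos (t/2)"
    by (rule mult_left_mono) simp_all
  then have "- exp (-t) \<le> cc t" unfolding cc_def by simp
  then have "-(u^2) \<le> cc t" by (simp add: em_u u_def)
  moreover have "u^3 + u - 2*u^2 = u * (u-1)^2" by (simp add: power2_eq_square power3_eq_cube algebra_simps)
  moreover have "0 \<le> u * (u-1)^2" using u by simp
  ultimately have "0 \<le> u^3 + u - 2*u^2" by simp
  moreover note \<open>-(u^2) \<le> cc t\<close>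
  moreover have "A0 t = (u^3 + u - 2*u^2)/4 + (cc t + u^2)/2"
    unfolding A0_def x1_u u_def[symmetric] by (simp add: field_simps)
  ultimately show ?thesis by simp
qed
lemma A2_nn: "0 \<le> A2 t"
proof -
  define u where "u = x2 t"
  have u: "0 < u" unfolding u_def by (rule x2_pos)
  have "exp (-t) * cos (t/2) \<le> exp (-t) * 1"
    by (rule mult_left_mono) simp_all
  then have "cc t \<le> exp (-t)" unfolding cc_def by simp
  then have "cc t \<le> u^2" by (simp add: em_u u_def)
  moreover have "u^3 + u - 2*u^2 = u * (u-1)^2" by (simp add: power2_eq_square power3_eq_cube algebra_simps)
  moreover have "0 \<le> u * (u-1)^2" using u by simp
  ultimately have "0 \<le> u^3 + u - 2*u^2" by simp
  moreover note \<open>cc t \<le> u^2\<close>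
  moreover have "A2 t = (u^3 + u - 2*u^2)/4 + (u^2 - cc t)/2"
    unfolding A2_def x1_u u_def[symmetric] by (simp add: field_simps)
  ultimately show ?thesis by simp
qed
lemma Ap_nn: "0 \<le> Ap t + A1 t + A3 t"
proof -
  define u where "u = x2 t"
  have u: "0 < u" unfolding u_def by (rule x2_pos)
  have "Ap t + A1 t + A3 t = (u - 1)^2 * (u + 2) / 6"
    unfolding Ap_def A1_def A3_def x1_u u_def[symmetric]
    by (simp add: power2_eq_square power3_eq_cube field_simps)
  also have "\<dots> \<ge> 0" using u by simp
  finally show ?thesis .
qed

lemma Et_kraus: "Et t X = A0 t *\<^sub>R X + A2 t *\<^sub>R Ad Dm X + (- A1 t) *\<^sub>R (Ad K1 X + Ad K2 X + Ad K3 X)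
   + (- A3 t) *\<^sub>R (Ad K1' X + Ad K2' X + Ad K3' X) + (Ap t + A1 t + A3 t) *\<^sub>R (\<Sum>a\<in>UNIV. \<Sum>c\<in>UNIV. Ad (Eu a c) X)"
proof -
  have "Et t X = A0 t *\<^sub>R X + A2 t *\<^sub>R Sop (Sop X) + (- A1 t) *\<^sub>R (Tm X - Sop X)
   + (- A3 t) *\<^sub>R (Tm X - Sop (Sop (Sop X))) + (Ap t + A1 t + A3 t) *\<^sub>R Tm X"
    by (simp add: Et_def lc_def algebra_simps)
  also have "\<dots> = A0 t *\<^sub>R X + A2 t *\<^sub>R Ad Dm X + (- A1 t) *\<^sub>R (Ad K1 X + Ad K2 X + Ad K3 X)
   + (- A3 t) *\<^sub>R (Ad K1' X + Ad K2' X + Ad K3' X) + (Ap t + A1 t + A3 t) *\<^sub>R (\<Sum>a\<in>UNIV. \<Sum>c\<in>UNIV. Ad (Eu a c) X)"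
    by (simp only: TmS3_Ad TmS_Ad, simp only: Sop2_Ad Tm_Ad)
  finally show ?thesis .
qed

lemma cp_id: "completely_positive (\<lambda>X. X)"
  unfolding completely_positive_def by simp

lemma cp_Et: assumes "0 \<le> t" shows "completely_positive (Et t)"
proof -
  have "completely_positive (\<lambda>X. A0 t *\<^sub>R X + A2 t *\<^sub>R Ad Dm X + (- A1 t) *\<^sub>R (Ad K1 X + Ad K2 X + Ad K3 X)
   + (- A3 t) *\<^sub>R (Ad K1' X + Ad K2' X + Ad K3' X) + (Ap t + A1 t + A3 t) *\<^sub>R (\<Sum>a\<in>UNIV. \<Sum>c\<in>UNIV. Ad (Eu a c) X))"
    by (intro cp_add cp_scale cp_id cp_Ad cp_sum A0_nn A2_nn nA1 nA3 Ap_nn assms) simp_all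
  moreover have "Et t = (\<lambda>X. A0 t *\<^sub>R X + A2 t *\<^sub>R Ad Dm X + (- A1 t) *\<^sub>R (Ad K1 X + Ad K2 X + Ad K3 X)
   + (- A3 t) *\<^sub>R (Ad K1' X + Ad K2' X + Ad K3' X) + (Ap t + A1 t + A3 t) *\<^sub>R (\<Sum>a\<in>UNIV. \<Sum>c\<in>UNIV. Ad (Eu a c) X))"
    by (rule ext) (rule Et_kraus)
  ultimately show ?thesis by simp
qed

lemma qds: "qds_unital (\<lambda>t. sup_exp t Lgen)"
proof -
  have "qds_unital Et"
    unfolding qds_unital_def unital_channel_def
    using Et_linear cp_Et Et_one trace_Et Et_0 Et_comp Et_cont by (auto simp: fun_eq_iff)
  moreover have "(\<lambda>t. sup_exp t Lgen) = Et" using sup_exp_Et by (simp add: fun_eq_iff)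
  ultimately show ?thesis by simp
qed



definition Gf :: "(M3 \<Rightarrow> M3) \<Rightarrow> complex" where
  "Gf \<Psi> = (\<Sum>c\<in>UNIV. \<Psi> (mat 1) $ c $ c) / 6 +
     (\<Sum>a\<in>UNIV. \<Sum>b\<in>UNIV. \<Sum>c\<in>UNIV. \<Sum>d\<in>UNIV. Bmat $ c $ b * Bmat $ d $ a * \<Psi> (Eu a b) $ c $ d) / 2"

lemma Gf_add: "Gf (\<lambda>X. f X + g X) = Gf f + Gf g"
  by (simp add: Gf_def sum.distrib distrib_left add_divide_distrib)

lemma Gf_scale: "Gf (\<lambda>X. r *\<^sub>R f X) = of_real r * Gf f"
  by (simp add: Gf_def sRc sum_distrib_left mult_ac distrib_left)

lemma Gf_zero: "Gf (\<lambda>X. 0) = 0"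
  by (simp add: Gf_def)

lemma Gf_sum: "Gf (\<lambda>X. \<Sum>j<(n::nat). w j *\<^sub>R F j X) = (\<Sum>j<n. of_real (w j) * Gf (F j))"
proof (induction n)
  case 0
  then show ?case by (simp add: Gf_zero)
next
  case (Suc n)
  have "Gf (\<lambda>X. \<Sum>j<Suc n. w j *\<^sub>R F j X) = Gf (\<lambda>X. (\<Sum>j<n. w j *\<^sub>R F j X) + w n *\<^sub>R F n X)"
    by simp
  also have "\<dots> = Gf (\<lambda>X. \<Sum>j<n. w j *\<^sub>R F j X) + of_real (w n) * Gf (F n)"
    by (simp only: Gf_add Gf_scale)
  finally show ?case using Suc by simp
qed

lemma Gf_lc: "Gf (\<lambda>X. lc a b c d p X) = of_real a * Gf (\<lambda>X. X) + of_real b * Gf Sop + of_real c * Gf (\<lambda>X. Sop (Sop X))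
   + of_real d * Gf (\<lambda>X. Sop (Sop (Sop X))) + of_real p * Gf Tm"
  unfolding lc_def by (simp only: Gf_add Gf_scale)

lemma Eu_e: "Eu a b $ i $ j = (if i = a \<and> j = b then 1 else 0)"
  by (simp add: Eu_def)

lemma Gf_id: "Gf (\<lambda>X. X) = 0"
  by (simp add: Gf_def sum3 Bmat_e Eu_e mat_def)
lemma Gf_S: "Gf Sop = 5"
  by (simp add: Gf_def sum3 Bmat_e Eu_e Sop_e sg_def pm_def mat_def)
lemma Gf_S2: "Gf (\<lambda>X. Sop (Sop X)) = 0"
  by (simp add: Gf_def sum3 Bmat_e Eu_e Sop_e sg_def pm_def mat_def)
lemma Gf_S3: "Gf (\<lambda>X. Sop (Sop (Sop X))) = 1"
  by (simp add: Gf_def sum3 Bmat_e Eu_e Sop_e sg_def pm_def mat_def)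
lemma Gf_Tm: "Gf Tm = 3"
  by (simp add: Gf_def sum3 Bmat_e Eu_e Tm_e mat_def)

lemma Gf_Et: "Gf (Et t) = of_real (exp (-t) * ff t)"
proof -
  have "Gf (Et t) = Gf (\<lambda>X. lc (A0 t) (A1 t) (A2 t) (A3 t) (Ap t) X)"
    unfolding Et_def by simp
  also have "\<dots> = of_real (5 * A1 t + A3 t + 3 * Ap t)"
    unfolding Gf_lc Gf_id Gf_S Gf_S2 Gf_S3 Gf_Tm by simp
  also have "5 * A1 t + A3 t + 3 * Ap t = exp (-t) * ff t"
    by (simp add: A1_def A3_def Ap_def ff_def sinh_def x1_split x2_split dd_def field_simps exp_minus)
  finally show ?thesis .
qed



lemma cs_ineq: "(cmod (\<Sum>b\<in>A. x b * y b))^2 \<le> (\<Sum>b\<in>A. (cmod (x b))^2) * (\<Sum>b\<in>A. (cmod (y b))^2)"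
proof -
  have "cmod (\<Sum>b\<in>A. x b * y b) \<le> (\<Sum>b\<in>A. cmod (x b) * cmod (y b))"
    by (rule order_trans[OF norm_sum]) (simp add: norm_mult)
  also have "\<dots> = (\<Sum>b\<in>A. \<bar>cmod (x b)\<bar> * \<bar>cmod (y b)\<bar>)" by simp
  also have "\<dots> \<le> L2_set (\<lambda>b. cmod (x b)) A * L2_set (\<lambda>b. cmod (y b)) A"
    by (rule L2_set_mult_ineq)
  finally have le: "cmod (\<Sum>b\<in>A. x b * y b) \<le> L2_set (\<lambda>b. cmod (x b)) A * L2_set (\<lambda>b. cmod (y b)) A" .
  have "(cmod (\<Sum>b\<in>A. x b * y b))^2 \<le> (L2_set (\<lambda>b. cmod (x b)) A * L2_set (\<lambda>b. cmod (y b)) A)^2"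
    by (rule power_mono[OF le]) simp
  also have "\<dots> = (\<Sum>b\<in>A. (cmod (x b))^2) * (\<Sum>b\<in>A. (cmod (y b))^2)"
    by (simp add: power_mult_distrib L2_set_def sum_nonneg)
  finally show ?thesis .
qed

definition nsq :: "complex^3 \<Rightarrow> real" where "nsq v = (\<Sum>a\<in>UNIV. (cmod (v $ a))^2)"

lemma cnj_mult_self: "cnj z * z = of_real ((cmod z)^2)"
  by (metis complex_norm_square mult.commute)

lemma nsq_unit: assumes "adj U ** U = mat 1" shows "nsq (U *v w) = nsq w"
proof -
  have "(\<Sum>b\<in>UNIV. cnj ((U *v w) $ b) * (U *v w) $ b) = (\<Sum>a\<in>UNIV. cnj (w $ a) * (adj U *v (U *v w)) $ a)"
    by (rule adj_inner[symmetric])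
  also have "\<dots> = (\<Sum>a\<in>UNIV. cnj (w $ a) * w $ a)"
    by (simp add: matrix_vector_mul_assoc assms)
  finally have "complex_of_real (nsq (U *v w)) = complex_of_real (nsq w)"
    by (simp add: nsq_def cnj_mult_self)
  then show ?thesis by simp
qed

lemma adj_mult: "adj (A ** B) = adj B ** adj (A :: complex^'n^'n)"
  by (simp add: vec_eq_iff adj_def matrix_matrix_mult_def mult.commute)

lemma Bmat_unit: "adj Bmat ** Bmat = mat 1"
  by (rule eq3I) (auto simp: matrix_matrix_mult_def adj_def sum3 Bmat_e mat_def)

lemma UB_unit: assumes "adj U ** U = mat 1" shows "adj (U ** Bmat) ** (U ** Bmat) = mat 1"
proof -
  have "adj (U ** Bmat) ** (U ** Bmat) = adj Bmat ** ((adj U ** U) ** Bmat)"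
    by (simp add: adj_mult matrix_mul_assoc)
  also have "\<dots> = mat 1" by (simp add: assms Bmat_unit)
  finally show ?thesis .
qed

lemma core:
  fixes M :: M3
  assumes u: "adj M ** M = mat 1"
  shows "-1 \<le> Re (\<Sum>a\<in>UNIV. \<Sum>b\<in>UNIV. cnj (M$a$b) * M$b$a)"
proof -
  define T where "T = (\<Sum>a\<in>UNIV. \<Sum>b\<in>UNIV. cnj (M$a$b) * M$b$a)"
  define S :: M3 where "S = (\<chi> a b. (M$a$b + M$b$a)/2)"
  define v :: "complex^3" where "v = (\<chi> i. if i = 0 then (M$1$2 - M$2$1)/2 else if i = 1 then (M$2$0 - M$0$2)/2
       else (M$0$1 - M$1$0)/2)"
  define froS where "froS = (\<Sum>a\<in>UNIV. \<Sum>b\<in>UNIV. (cmod (S$a$b))^2)"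
  have diag: "(\<Sum>a\<in>UNIV. cnj (M$a$b) * M$a$b) = 1" for b
  proof -
    have "(adj M ** M) $ b $ b = 1" using u by (simp add: mat_def)
    then show ?thesis by (simp add: matrix_matrix_mult_def adj_def)
  qed
  have fro: "(\<Sum>a\<in>UNIV. \<Sum>b\<in>UNIV. cnj (M$a$b) * M$a$b) = 3"
  proof -
    have "(\<Sum>a\<in>UNIV. \<Sum>b\<in>UNIV. cnj (M$a$b) * M$a$b) = (\<Sum>b\<in>UNIV. \<Sum>a\<in>UNIV. cnj (M$a$b) * M$a$b)"
      by (rule sum.swap)
    also have "\<dots> = 3" by (simp add: diag sum3)
    finally show ?thesis .
  qed
  have hMS: "M *v v = S *v v"
  proof -
    have "(M *v v) $ i = (S *v v) $ i" for i :: 3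
      using idx3[of i]
      by (auto simp: matrix_vector_mult_def sum3 S_def v_def field_simps)
    then show ?thesis by (simp add: vec_eq_iff)
  qed
  have h2: "nsq (S *v v) = nsq v" using nsq_unit[OF u, of v] hMS by simp
  have h3: "nsq (S *v v) \<le> froS * nsq v"
  proof -
    have "nsq (S *v v) = (\<Sum>a\<in>UNIV. (cmod (\<Sum>b\<in>UNIV. S$a$b * v$b))^2)"
      by (simp add: nsq_def matrix_vector_mult_def)
    also have "\<dots> \<le> (\<Sum>a\<in>UNIV. (\<Sum>b\<in>UNIV. (cmod (S$a$b))^2) * nsq v)"
      unfolding nsq_def by (rule sum_mono) (rule cs_ineq)
    also have "\<dots> = froS * nsq v" by (simp add: froS_def sum_distrib_right)
    finally show ?thesis .
  qed
  have h40: "complex_of_real froS = (\<Sum>a\<in>UNIV. \<Sum>b\<in>UNIV. cnj (S$a$b) * S$a$b)"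
    by (simp add: froS_def cnj_mult_self)
  have h4: "complex_of_real froS = (\<Sum>a\<in>UNIV. \<Sum>b\<in>UNIV. cnj (M$a$b) * M$a$b)/2 + T/2"
    unfolding h40 by (simp add: T_def S_def sum3 field_simps)
  then have h5: "froS = 3/2 + Re T / 2"
    unfolding fro by (metis Re_complex_of_real Re_divide_numeral complex_Re_numeral plus_complex.sel(1))
  show ?thesis
  proof (cases "nsq v = 0")
    case True
    have "\<forall>a\<in>UNIV. (cmod (v$a))^2 = 0"
      using True unfolding nsq_def by (subst sum_nonneg_eq_0_iff[symmetric]) auto
    then have z: "v$0 = 0" "v$1 = 0" "v$2 = 0" by auto
    then have sym: "M$1$2 = M$2$1" "M$2$0 = M$0$2" "M$0$1 = M$1$0" by (simp_all add: v_def)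
    have "T = (\<Sum>a\<in>UNIV. \<Sum>b\<in>UNIV. cnj (M$a$b) * M$a$b)"
      by (simp add: T_def sum3 sym)
    then have "T = 3" using fro by simp
    then show ?thesis unfolding T_def by simp
  next
    case False
    then have pos: "0 < nsq v" unfolding nsq_def by (simp add: sum_nonneg order_le_neq_trans)
    from h2 h3 have "1 * nsq v \<le> froS * nsq v" by simp
    then have "1 \<le> froS" using pos by (simp add: mult_le_cancel_right)
    then show ?thesis using h5 unfolding T_def by simp
  qed
qed



lemma fact3: "fact 3 = (6::real)" by (simp add: eval_nat_numeral)
lemma sin_poly3: "(\<Sum>m<3. sin_coeff m * x ^ m) = (x::real)"
  by (simp add: numeral_3_eq_3 sin_coeff_def)
lemma sin_t1: "\<bar>sin x - x\<bar> \<le> inverse 6 * \<bar>x::real\<bar> ^ 3"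
  using Maclaurin_sin_bound[of x 3] unfolding sin_poly3 fact3 .
lemma sin_t2: "\<bar>sin x - x\<bar> * 6 \<le> \<bar>x::real\<bar> ^ 3"
  using sin_t1[of x] by (simp add: field_simps)
lemma sin_lower: fixes x :: real assumes "0 \<le> x" shows "6 * x - x^3 \<le> 6 * sin x"
proof -
  define A where "A = \<bar>sin x - x\<bar>"
  have "A * 6 \<le> x ^ 3" using sin_t2[of x] assms by (simp add: A_def)
  moreover have "x - sin x \<le> A" unfolding A_def by (metis abs_ge_minus_self minus_diff_eq)
  ultimately show ?thesis by linarith
qed

lemma ff_form: "ff t = (exp (t/2) - 1)^2 * (exp (t/2) + 1/2) / exp (t/2) - 2 * sin (t/2)"
proof -
  define y where "y = exp (t/2)"
  have y: "0 < y" by (simp add: y_def)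
  have e1: "exp t = y^2" unfolding y_def by (simp add: power2_eq_square exp_add[symmetric])
  have e2: "exp (-t/2) = 1/y" unfolding y_def by (simp add: exp_minus inverse_eq_divide)
  have e2': "exp (-(t/2)) = 1/y" unfolding y_def by (simp add: exp_minus inverse_eq_divide)
  have e3: "sinh (t/2) = (y - 1/y)/2" unfolding sinh_def e2' by (simp add: y_def)
  have "ff t = y^2 - 1/y - 3 * ((y - 1/y)/2) - 2 * sin (t/2)"
    by (simp only: ff_def e1 e2 e3)
  also have "\<dots> = (y - 1)^2 * (y + 1/2) / y - 2 * sin (t/2)"
    using y by (simp add: field_simps power2_eq_square)
  finally show ?thesis unfolding y_def .
qed

lemma ff_neg_small: assumes "0 < t" "t \<le> 1/2" shows "ff t < 0"
proof -
  define u where "u = t/2"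
  define y where "y = exp u"
  have u0: "0 < u" using assms by (simp add: u_def)
  have u1: "4 * u \<le> 1" using assms by (simp add: u_def)
  have un: "norm u \<le> 1/2" using u0 u1 by simp
  have y1: "1 \<le> y" unfolding y_def using u0 by simp
  have y2: "y \<le> 1 + 2*u"
    using exp_bound_lemma[OF un] u0 unfolding y_def by simp
  have a: "(y - 1)^2 \<le> (2*u)^2"
    using y1 y2 by (intro power_mono) auto
  have b: "(y + 1/2) / y \<le> 3/2"
    using y1 by (simp add: field_simps)
  have c: "(y - 1)^2 * ((y + 1/2) / y) \<le> (2*u)^2 * (3/2)"
    using a b y1 by (intro mult_mono) auto
  have c': "(2*u)^2 * (3/2) = 6 * (u*u)" by (simp add: power2_eq_square)
  have "u*u \<le> u*(1/4)" using u0 u1 by (intro mult_left_mono) auto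
  then have h1: "4*(u*u) \<le> u" by simp
  have "u*u \<le> u*1" using u0 u1 by (intro mult_left_mono) auto
  then have uu: "u*u \<le> u" by simp
  have "u*(u*u) \<le> u*u" using u0 uu by (intro mult_left_mono) auto
  then have h2: "u^3 \<le> u" using uu by (simp add: power3_eq_cube)
  have s: "6 * u - u^3 \<le> 6 * sin u" using sin_lower u0 by simp
  have "(y - 1)^2 * ((y + 1/2) / y) < 2 * sin u"
    using c c' h1 h2 s u0 by linarith
  then show ?thesis unfolding ff_form u_def[symmetric] y_def[symmetric] by simp
qed

lemma ff_pos2: "0 < ff 2"
proof -
  define y where "y = exp (1::real)"
  have y: "5/2 \<le> y" unfolding y_def using exp_lower_Taylor_quadratic[of 1] by simp
  define d where "d = y - 5/2"
  have d: "0 \<le> d" using y by (simp add: d_def)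
  have "(y - 1)^2 * (y + 1/2) - 2*y = 7/4 + (37/4)*d + 6*d^2 + d^3"
    unfolding d_def by (simp add: power2_eq_square power3_eq_cube field_simps)
  also have "\<dots> > 0" using d by (simp add: add_pos_nonneg)
  finally have "2*y < (y - 1)^2 * (y + 1/2)" by simp
  then have q: "2 < (y - 1)^2 * (y + 1/2) / y" using y by (simp add: field_simps)
  have "2 * sin (1::real) \<le> 2" using sin_le_one[of 1] by simp
  then have "2 * sin (1::real) < (y - 1)^2 * (y + 1/2) / y" using q by (rule le_less_trans)
  then show ?thesis unfolding ff_form y_def by simp
qed

lemma ff_cont: "continuous_on S ff"
  unfolding ff_def by (intro continuous_intros) auto



lemma Ad_Eu: "Ad U (Eu a b) $ c $ d = cnj (U$a$c) * U$b$d"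
  using idx3[of a] idx3[of b] by (auto simp: Ad_e Eu_e sum3)

lemma Ad_one: "adj U ** U = mat 1 \<Longrightarrow> Ad U (mat 1) = mat 1"
  by (simp add: Ad_def)

lemma Bsum_eq: "(\<Sum>a\<in>UNIV. \<Sum>b\<in>UNIV. \<Sum>c\<in>UNIV. \<Sum>d\<in>UNIV. Bmat $ c $ b * Bmat $ d $ a * (cnj (U$a$c) * U$b$d))
   = (\<Sum>a\<in>UNIV. \<Sum>b\<in>UNIV. cnj ((U ** Bmat)$a$b) * (U ** Bmat)$b$a)"
  by (simp add: sum3 Bmat_e matrix_matrix_mult_def)

lemma Gf_Ad_nn: assumes u: "adj U ** U = mat 1" shows "0 \<le> Re (Gf (Ad U))"
proof -
  have "Gf (Ad U) = 3 / 6 + (\<Sum>a\<in>UNIV. \<Sum>b\<in>UNIV. cnj ((U ** Bmat)$a$b) * (U ** Bmat)$b$a) / 2"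
    unfolding Gf_def Ad_one[OF u] Ad_Eu Bsum_eq by (simp add: sum3 mat_def)
  moreover have "-1 \<le> Re (\<Sum>a\<in>UNIV. \<Sum>b\<in>UNIV. cnj ((U ** Bmat)$a$b) * (U ** Bmat)$b$a)"
    by (rule core[OF UB_unit[OF u]])
  ultimately show ?thesis by simp
qed

lemma not_mu: assumes "ff t < 0" shows "\<not> mixed_unitary (Et t)"
proof
  assume "mixed_unitary (Et t)"
  then obtain n w U where c: "\<forall>j<n. 0 \<le> w j \<and> unitary_mat (U j)"
    and e: "\<forall>X. Et t X = (\<Sum>j<(n::nat). w j *\<^sub>R Ad (U j) X)"
    unfolding mixed_unitary_def by blast
  have eq: "Et t = (\<lambda>X. \<Sum>j<n. w j *\<^sub>R Ad (U j) X)" using e by (simp add: fun_eq_iff)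
  have G: "Gf (Et t) = (\<Sum>j<n. of_real (w j) * Gf (Ad (U j)))"
    unfolding eq by (rule Gf_sum)
  have R: "Re (Gf (Et t)) = (\<Sum>j<n. w j * Re (Gf (Ad (U j))))"
    unfolding G Re_sum Re_ofr ..
  have "0 \<le> (\<Sum>j<n. w j * Re (Gf (Ad (U j))))"
  proof (rule sum_nonneg)
    fix j assume "j \<in> {..<n}"
    then have "0 \<le> w j" "adj (U j) ** U j = mat 1" using c by (auto simp: unitary_mat_def)
    then show "0 \<le> w j * Re (Gf (Ad (U j)))" using Gf_Ad_nn by (simp add: mult_nonneg_nonneg)
  qed
  then have "0 \<le> exp (-t) * ff t" using R unfolding Gf_Et by simp
  moreover have "exp (-t) * ff t < 0" by (rule mult_pos_neg) (simp_all add: assms)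
  ultimately show False by simp
qed

theorem mainTheorem15:
  shows "qds_unital (\<lambda>t. sup_exp t Lgen) \<and>
    (\<exists>t0>0. ff t0 = 0 \<and> (\<forall>s. 0 < s \<and> s < t0 \<longrightarrow> ff s \<noteq> 0) \<and>
       (\<forall>t. 0 < t \<and> t < t0 \<longrightarrow> \<not> mixed_unitary (sup_exp t Lgen)))"
proof -
  define Z where "Z = {x \<in> {1/2..2::real}. ff x = 0}"
  define t0 where "t0 = Inf Z"
  have fh: "ff (1/2) < 0" by (rule ff_neg_small) auto
  have f2: "0 < ff 2" by (rule ff_pos2)
  obtain x where x: "1/2 \<le> x" "x \<le> 2" "ff x = 0"
    using IVT'[of ff "1/2" 0 2] fh f2 ff_cont by force
  have Zne: "Z \<noteq> {}" using x unfolding Z_def by auto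
  have Zcl: "closed Z" unfolding Z_def
    by (rule continuous_closed_preimage_constant[OF ff_cont closed_atLeastAtMost])
  have Zbd: "bdd_below Z" unfolding Z_def by (rule bdd_belowI[of _ "1/2"]) auto
  have t0Z: "t0 \<in> Z" unfolding t0_def by (rule closed_contains_Inf[OF Zne Zbd Zcl])
  then have t0: "1/2 \<le> t0" "t0 \<le> 2" "ff t0 = 0" unfolding Z_def by auto
  have low: "t0 \<le> s" if "s \<in> Z" for s unfolding t0_def by (rule cInf_lower[OF that Zbd])
  have neg: "ff s < 0" if "0 < s" "s < t0" for s
  proof (cases "s \<le> 1/2")
    case True
    then show ?thesis using ff_neg_small that by simp
  next
    case False
    show ?thesis
    proof (rule ccontr)
      assume "\<not> ff s < 0"
      then have "0 \<le> ff s" by simp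
      then obtain z where z: "1/2 \<le> z" "z \<le> s" "ff z = 0"
        using IVT'[of ff "1/2" 0 s] fh False ff_cont by force
      then have "z \<in> Z" using that t0 unfolding Z_def by auto
      then have "t0 \<le> z" by (rule low)
      then show False using z that by simp
    qed
  qed
  have "qds_unital (\<lambda>t. sup_exp t Lgen)" by (rule qds)
  moreover have "\<forall>s. 0 < s \<and> s < t0 \<longrightarrow> ff s \<noteq> 0" using neg by force
  moreover have "\<forall>t. 0 < t \<and> t < t0 \<longrightarrow> \<not> mixed_unitary (sup_exp t Lgen)"
    using neg not_mu by (simp add: sup_exp_Et)
  moreover have "0 < t0" using t0 by simp
  ultimately show ?thesis using t0 by blast
qed


end
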